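(* Let $c_b=\sum_{a=b+1}^{2b}|c_{a,b}|$. There is a constant $C_3<\infty$ such that $c_b\le C_3^b\, b!$ for all $b\ge1$.
   Context: The $c_{a,b}$, $(a,b)\in I=\{b\ge1,\ b+1\le a\le 2b\}$, are the lace-expansion coefficients for self-avoiding walk on $\mathbb Z^d$ (with memory $\tau\ge a$): let $f_\tau(a,N,D)$ be the number of equivalence classes, under the $2^D D!$ signed coordinate permutations of $\mathbb Z^D$, of memory-$\tau$ lace graphs of length $a$, type $N$ and dimensionality exactly $D$ (lace graphs are nearest-neighbour walks with additional structure as in the Brydges–Spencer lace expansion; the set of lace graphs is invariant under lattice symmetries, there are at most $(2D)^a$ lace graphs of length $a$ in $\mathbb Z^D$ in total over all types, and a lace graph of dimensionality $D$ has length at least $2D$). With $s=1/(2d)$, $c_{a,b,N}$ is defined by $\sum_{D=1}^{\lfloor a/2\rfloor}f_\tau(a,N,D)\,2d(2d-2)\cdots(2d-2D+2)=\sum_{b=\lceil a/2\rceil}^{a-1}c_{a,b,N}s^{b-a}$, and $c_{a,b}=\sum_{N\ge1}(-1)^{N+1}c_{a,b,N}$. *)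

theory Defs
  imports Main "HOL-Combinatorics.Permutations" "HOL-Computational_Algebra.Polynomial"
begin

text \<open>A lace graph of length a is modelled as a pair (extra structure, walk), where the
walk is a nearest-neighbour walk from the origin given by its list of steps; a step
is (coordinate index, True = positive direction / False = negative direction).
Coordinates range over nat, so a walk lies in Z^D iff all its coordinates are < D.\<close>

type_synonym 'g lgraph = "'g \<times> (nat \<times> bool) list"

definition coords :: "'g lgraph \<Rightarrow> nat set" where
  "coords x = fst ` set (snd x)"

definition dimensionality :: "'g lgraph \<Rightarrow> nat" where
  "dimensionality x = card (coords x)"

definition act :: "(nat \<Rightarrow> nat) \<Rightarrow> (nat \<Rightarrow> bool) \<Rightarrow> 'g lgraph \<Rightarrow> 'g lgraph" where
  "act p e x = (fst x, map (\<lambda>(i, sg). (p i, sg \<noteq> e i)) (snd x))"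

definition sperm_rel :: "nat \<Rightarrow> 'g lgraph set \<Rightarrow> ('g lgraph \<times> 'g lgraph) set" where
  "sperm_rel D A = {(x, y). x \<in> A \<and> y \<in> A \<and>
      (\<exists>p e. p permutes {..<D} \<and> y = act p e x)}"

text \<open>f(a,N,D): number of equivalence classes of lace graphs of length a, type N and
dimensionality exactly D in Z^D.\<close>
definition lace_f :: "(nat \<Rightarrow> nat \<Rightarrow> 'g lgraph set) \<Rightarrow> nat \<Rightarrow> nat \<Rightarrow> nat \<Rightarrow> nat" where
  "lace_f LG a N D =
     (let A = {x \<in> LG a N. coords x = {..<D}} in card (A // sperm_rel D A))"

text \<open>c_{a,b,N}: with x = 1/s = 2d, 2d(2d-2)...(2d-2D+2) = prod_{j<D} (x - 2j), and
c_{a,b,N} is the coefficient of x^(a-b) = s^(b-a) in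
sum_{D=1}^{floor(a/2)} f(a,N,D) prod_{j<D}(x - 2j).\<close>
definition lace_c :: "(nat \<Rightarrow> nat \<Rightarrow> 'g lgraph set) \<Rightarrow> nat \<Rightarrow> nat \<Rightarrow> nat \<Rightarrow> int" where
  "lace_c LG a b N =
     coeff (\<Sum>D\<in>{1..a div 2}. of_nat (lace_f LG a N D) *
              (\<Prod>j<D. [:- 2 * of_nat j, 1:])) (a - b)"

definition lace_cab :: "(nat \<Rightarrow> nat \<Rightarrow> 'g lgraph set) \<Rightarrow> nat \<Rightarrow> nat \<Rightarrow> int" where
  "lace_cab LG a b =
     (\<Sum>N\<in>{N. 1 \<le> N \<and> lace_c LG a b N \<noteq> 0}. (-1) ^ (N + 1) * lace_c LG a b N)"

end

theory Submission
  imports Defs Complex_Main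
begin


lemma act_id: "act id (\<lambda>_. False) x = x"
  by (cases x) (simp add: act_def case_prod_unfold)

lemma act_comp: "act p e (act q f x) = act (p \<circ> q) (\<lambda>i. f i \<noteq> e (q i)) x"
  by (cases x) (auto simp add: act_def case_prod_unfold)

lemma coords_act: "coords (act p e x) = p ` coords x"
  by (cases x) (force simp add: act_def coords_def case_prod_unfold image_image)

lemma equiv_sperm:
  assumes closed: "\<forall>x\<in>A. \<forall>p e. p permutes {..<D} \<longrightarrow> act p e x \<in> A"
  shows "equiv A (sperm_rel D A)"
proof (rule equivI)
  show "refl_on A (sperm_rel D A)"
    unfolding refl_on_def sperm_rel_def
    by (auto intro!: exI[of _ id] exI[of _ "\<lambda>_. False"] simp: act_id permutes_id)
  show "sym (sperm_rel D A)"
  proof (rule symI)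
    fix x y assume "(x, y) \<in> sperm_rel D A"
    then obtain p e where xy: "x \<in> A" "y \<in> A" "p permutes {..<D}" "y = act p e x"
      unfolding sperm_rel_def by auto
    have "act (inv p) (\<lambda>i. e (inv p i)) y = act (inv p \<circ> p) (\<lambda>i. e i \<noteq> e (inv p (p i))) x"
      using xy(4) by (simp add: act_comp)
    also have "\<dots> = act id (\<lambda>_. False) x"
      using permutes_inverses(2)[OF xy(3)] permutes_inv_o(2)[OF xy(3)] by simp
    also have "\<dots> = x" by (rule act_id)
    finally have "act (inv p) (\<lambda>i. e (inv p i)) y = x" .
    then show "(y, x) \<in> sperm_rel D A"
      using xy permutes_inv[OF xy(3)] unfolding sperm_rel_def by blast
  qed
  show "trans (sperm_rel D A)"
  proof (rule transI)
    fix x y z assume "(x, y) \<in> sperm_rel D A" "(y, z) \<in> sperm_rel D A"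
    then obtain p e q f where h: "x \<in> A" "z \<in> A" "p permutes {..<D}" "y = act p e x"
       "q permutes {..<D}" "z = act q f y"
      unfolding sperm_rel_def by auto
    then show "(x, z) \<in> sperm_rel D A"
      unfolding sperm_rel_def using permutes_compose[OF h(3) h(5)]
      by (auto simp: act_comp)
  qed
qed (auto simp: sperm_rel_def)

lemma act_inj:
  assumes cx: "coords x = {..<D}"
  shows "inj_on (\<lambda>(p, e). act p e x) ({p. p permutes {..<D}} \<times> ((\<lambda>S i. i \<in> S) ` Pow {..<D}))"
proof (rule inj_onI)
  fix u v
  assume u: "u \<in> {p. p permutes {..<D}} \<times> ((\<lambda>S i. i \<in> S) ` Pow {..<D})"
     and v: "v \<in> {p. p permutes {..<D}} \<times> ((\<lambda>S i. i \<in> S) ` Pow {..<D})"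
     and eq0: "(\<lambda>(p, e). act p e x) u = (\<lambda>(p, e). act p e x) v"
  from u obtain p e where ue: "u = (p, \<lambda>i. i \<in> e)" and p: "p permutes {..<D}" and e: "e \<subseteq> {..<D}"
    by auto
  from v obtain q f where vf: "v = (q, \<lambda>i. i \<in> f)" and q: "q permutes {..<D}" and f: "f \<subseteq> {..<D}"
    by auto
  have eq: "act p (\<lambda>i. i \<in> e) x = act q (\<lambda>i. i \<in> f) x" using eq0 ue vf by simp
  have m: "\<forall>s\<in>set (snd x). (\<lambda>(i, sg). (p i, sg \<noteq> (i \<in> e))) s = (\<lambda>(i, sg). (q i, sg \<noteq> (i \<in> f))) s"
    using eq by (cases x) (simp add: act_def map_eq_conv)
  have pe: "\<forall>i<D. p i = q i \<and> (i \<in> e) = (i \<in> f)"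
  proof (intro allI impI)
    fix i assume "i < D"
    then have "i \<in> coords x" using cx by auto
    then obtain sg where "(i, sg) \<in> set (snd x)" unfolding coords_def by force
    then have "(\<lambda>(i, sg). (p i, sg \<noteq> (i \<in> e))) (i, sg) = (\<lambda>(i, sg). (q i, sg \<noteq> (i \<in> f))) (i, sg)"
      using m by blast
    then show "p i = q i \<and> (i \<in> e) = (i \<in> f)" by auto
  qed
  moreover have "\<forall>i. \<not> i < D \<longrightarrow> p i = q i"
    using p q by (simp add: permutes_def)
  ultimately have "p = q"
  proof (intro ext)
    fix i
    assume h1: "\<forall>i<D. p i = q i \<and> (i \<in> e) = (i \<in> f)" and h2: "\<forall>i. \<not> i < D \<longrightarrow> p i = q i"
    show "p i = q i" using h1 h2 by (cases "i < D") auto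
  qed
  moreover have "e = f"
  proof (rule set_eqI)
    fix i show "i \<in> e \<longleftrightarrow> i \<in> f" using pe e f by (cases "i < D") auto
  qed
  ultimately show "u = v" using ue vf by simp
qed

lemma card_E: "card ((\<lambda>S i. i \<in> S) ` Pow {..<(D::nat)}) = 2 ^ D"
proof -
  have "inj_on (\<lambda>S i. i \<in> S) (Pow {..<D})"
    by (rule inj_onI) (metis Collect_mem_eq)
  then show ?thesis by (simp add: card_image card_Pow)
qed

lemma classes_bound:
  fixes A :: "'g lgraph set"
  assumes fin: "finite A" and coordsA: "\<forall>x\<in>A. coords x = {..<D}"
    and closed: "\<forall>x\<in>A. \<forall>p e. p permutes {..<D} \<longrightarrow> act p e x \<in> A"
  shows "card (A // sperm_rel D A) * (2 ^ D * fact D) \<le> card A"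
proof -
  let ?R = "sperm_rel D A"
  let ?G = "{p. p permutes {..<D}} \<times> ((\<lambda>S i. i \<in> S) ` Pow {..<D})"
  have eqv: "equiv A ?R" by (rule equiv_sperm[OF closed])
  have cG: "card ?G = fact D * 2 ^ D"
  proof -
    have "card {p. p permutes {..<D}} = fact D" by (rule card_permutations) simp_all
    then show ?thesis by (simp only: card_cartesian_product card_E)
  qed
  have big: "2 ^ D * fact D \<le> card X" if X: "X \<in> A // ?R" for X
  proof -
    obtain x where x: "x \<in> A" and Xx: "X = ?R `` {x}" using X by (rule quotientE)
    have sub: "(\<lambda>(p, e). act p e x) ` ?G \<subseteq> X"
    proof
      fix y assume "y \<in> (\<lambda>(p, e). act p e x) ` ?G"
      then obtain p S where p: "p permutes {..<D}" and y: "y = act p (\<lambda>i. i \<in> S) x" by auto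
      have "act p (\<lambda>i. i \<in> S) x \<in> A" using x closed p by blast
      then show "y \<in> X" unfolding Xx sperm_rel_def using x p y by blast
    qed
    have "X \<subseteq> A" unfolding Xx sperm_rel_def by blast
    then have finX: "finite X" using fin by (rule finite_subset)
    have "card ?G = card ((\<lambda>(p, e). act p e x) ` ?G)"
      using act_inj[of x D] coordsA x by (metis card_image)
    also have "\<dots> \<le> card X" using card_mono[OF finX sub] .
    finally show ?thesis using cG by (metis mult.commute)
  qed
  have "card A = card (\<Union>(A // ?R))" by (simp add: Union_quotient[OF eqv])
  also have "\<dots> = sum card (A // ?R)"
  proof (rule card_Union_disjoint)
    show "pairwise disjnt (A // ?R)"
      unfolding pairwise_def disjnt_def using quotient_disj[OF eqv] by blast
    show "\<And>X. X \<in> A // ?R \<Longrightarrow> finite X"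
      by (rule finite_equiv_class[OF fin equiv_type[OF eqv]])
  qed
  finally have cA: "card A = sum card (A // ?R)" .
  have s: "sum (\<lambda>_. 2 ^ D * fact D) (A // ?R) \<le> sum card (A // ?R)"
    by (rule sum_mono) (rule big)
  have "sum (\<lambda>_. 2 ^ D * fact D) (A // ?R) = card (A // ?R) * (2 ^ D * fact D)"
    by simp
  then show ?thesis using s cA by simp
qed



lemma coeffP:
  "\<bar>coeff (\<Prod>j<D. [:- 2 * of_nat j, 1:] :: int poly) m\<bar> \<le> int (D choose m) * (2 * int D) ^ (D - m)"
proof (induction D arbitrary: m)
  case 0
  then show ?case by (cases m) auto
next
  case (Suc D)
  let ?P = "(\<Prod>j<D. [:- 2 * of_nat j, 1:] :: int poly)"
  have eq: "(\<Prod>j<Suc D. [:- 2 * of_nat j, 1:] :: int poly) = smult (- 2 * int D) ?P + pCons 0 ?P"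
    by (simp add: mult_pCons_left mult.commute)
  show ?case
  proof (cases m)
    case 0
    have "\<bar>coeff (\<Prod>j<Suc D. [:- 2 * of_nat j, 1:] :: int poly) m\<bar> = 2 * int D * \<bar>coeff ?P 0\<bar>"
      using 0 by (simp add: eq abs_mult)
    also have "\<dots> \<le> 2 * int D * (2 * int D) ^ D"
      using Suc.IH[of 0] by (intro mult_left_mono) auto
    also have "\<dots> \<le> (2 * int (Suc D)) * (2 * int (Suc D)) ^ D"
      by (intro mult_mono power_mono) auto
    also have "\<dots> = (2 * int (Suc D)) ^ Suc D" by simp
    finally show ?thesis using 0 by simp
  next
    case (Suc k)
    have c: "coeff (\<Prod>j<Suc D. [:- 2 * of_nat j, 1:] :: int poly) m = - 2 * int D * coeff ?P (Suc k) + coeff ?P k"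
      using Suc by (simp add: eq)
    show ?thesis
    proof (cases "k < D")
      case True
      have "\<bar>- 2 * int D * coeff ?P (Suc k) + coeff ?P k\<bar> \<le> 2 * int D * \<bar>coeff ?P (Suc k)\<bar> + \<bar>coeff ?P k\<bar>"
        using abs_triangle_ineq[of "- 2 * int D * coeff ?P (Suc k)" "coeff ?P k"] by (simp add: abs_mult)
      also have "\<dots> \<le> 2 * int D * (int (D choose Suc k) * (2 * int D) ^ (D - Suc k)) + int (D choose k) * (2 * int D) ^ (D - k)"
        by (intro add_mono mult_left_mono Suc.IH) auto
      also have "2 * int D * (int (D choose Suc k) * (2 * int D) ^ (D - Suc k)) = int (D choose Suc k) * (2 * int D) ^ (D - k)"
      proof -
        have "D - k = Suc (D - Suc k)" using True by simp
        then show ?thesis by (simp add: algebra_simps)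
      qed
      also have "int (D choose Suc k) * (2 * int D) ^ (D - k) + int (D choose k) * (2 * int D) ^ (D - k)
           = int (Suc D choose Suc k) * (2 * int D) ^ (D - k)"
        by (simp add: algebra_simps)
      also have "\<dots> \<le> int (Suc D choose Suc k) * (2 * int (Suc D)) ^ (D - k)"
        by (intro mult_left_mono power_mono) auto
      finally show ?thesis using c Suc by simp
    next
      case False
      have "?P = (\<Prod>j<D. [:- 2 * of_nat j, 1:])" by simp
      have deg: "degree ?P \<le> D"
        by (rule order.trans[OF degree_prod_sum_le]) auto
      have z: "coeff ?P (Suc k) = 0" using deg False by (intro coeff_eq_0) auto
      have "\<bar>coeff (\<Prod>j<Suc D. [:- 2 * of_nat j, 1:] :: int poly) m\<bar> = \<bar>coeff ?P k\<bar>"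
        using c z by simp
      also have "\<dots> \<le> int (D choose k) * (2 * int D) ^ (D - k)" by (rule Suc.IH)
      also have "\<dots> = int (D choose k)" using False by simp
      also have "\<dots> \<le> int (Suc D choose Suc k)" by simp
      also have "\<dots> = int (Suc D choose m) * (2 * int (Suc D)) ^ (Suc D - m)"
        using False Suc by simp
      finally show ?thesis .
    qed
  qed
qed

lemma pow_le_exp_fact: "real n ^ n \<le> exp (real n) * fact n"
proof -
  have s: "summable (\<lambda>k. real n ^ k /\<^sub>R fact k)"
    using exp_converges[of "real n"] sums_summable by blast
  have "(\<Sum>k\<in>{n}. real n ^ k /\<^sub>R fact k) \<le> (\<Sum>k. real n ^ k /\<^sub>R fact k)"
    by (rule sum_le_suminf[OF s]) auto
  also have "\<dots> = exp (real n)" using exp_converges[of "real n"] sums_unique by metis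
  finally have "real n ^ n / fact n \<le> exp (real n)" by (simp add: divide_inverse mult.commute)
  then show ?thesis by (simp add: divide_le_eq mult.commute)
qed



abbreviation QQ :: "nat \<Rightarrow> int poly" where "QQ D \<equiv> (\<Prod>j<D. [:- 2 * of_nat j, 1:])"

lemma term_bound:
  assumes "1 \<le> D" "D \<le> b" "b < a" "a \<le> 2*b"
  shows "real_of_int \<bar>coeff (QQ D) (a-b)\<bar> * (2*real D)^a / (2^D * fact D) \<le> (4*exp 1^2)^b * fact b"
proof (cases "a - b \<le> D")
  case True
  have pos: "(0::real) < 2^D * fact D" by simp
  have c: "real_of_int \<bar>coeff (QQ D) (a-b)\<bar> \<le> real (D choose (a-b)) * (2*real D)^(D-(a-b))"
  proof -
    have "real_of_int \<bar>coeff (QQ D) (a-b)\<bar> \<le> real_of_int (int (D choose (a-b)) * (2 * int D) ^ (D - (a-b)))"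
      using coeffP[of D "a-b"] by linarith
    then show ?thesis by simp
  qed
  have ch: "real (D choose (a-b)) \<le> 2^D"
    using binomial_le_pow2[of D "a-b"] by (metis of_nat_le_iff of_nat_numeral of_nat_power)
  have e: "D - (a-b) + a = D + b" using True assms by simp
  have "real_of_int \<bar>coeff (QQ D) (a-b)\<bar> * (2*real D)^a \<le> 2^D * (2*real D)^(D-(a-b)) * (2*real D)^a"
  proof (rule mult_right_mono)
    have "real (D choose (a-b)) * (2*real D)^(D-(a-b)) \<le> 2^D * (2*real D)^(D-(a-b))"
      by (rule mult_right_mono[OF ch]) simp
    then show "real_of_int \<bar>coeff (QQ D) (a-b)\<bar> \<le> 2^D * (2*real D)^(D-(a-b))" using c by linarith
  qed simp
  also have "\<dots> = 2^D * (2*real D)^(D-(a-b)+a)" by (simp only: power_add mult.assoc)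
  also have "\<dots> = 2^D * (2*real D)^(D+b)" by (simp only: e)
  finally have t0: "real_of_int \<bar>coeff (QQ D) (a-b)\<bar> * (2*real D)^a \<le> 2^D * (2*real D)^(D+b)" .
  have t1: "real_of_int \<bar>coeff (QQ D) (a-b)\<bar> * (2*real D)^a / (2^D * fact D) \<le> (2*real D)^(D+b) / fact D"
  proof -
    have "real_of_int \<bar>coeff (QQ D) (a-b)\<bar> * (2*real D)^a / (2^D * fact D) \<le> (2^D * (2*real D)^(D+b)) / (2^D * fact D)"
      by (rule divide_right_mono[OF t0]) simp
    also have "\<dots> = (2*real D)^(D+b) / fact D" by (rule mult_divide_mult_cancel_left) simp
    finally show ?thesis .
  qed
  have "(2*real D)^(D+b) = 2^(D+b) * (real D^D * real D^b)"
    by (simp add: power_mult_distrib power_add)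
  also have "\<dots> \<le> 4^b * ((exp (real b) * fact D) * (exp (real b) * fact b))"
  proof (intro mult_mono)
    have "(2::real)^(D+b) \<le> 2^(2*b)" using assms by (intro power_increasing) auto
    then show "(2::real)^(D+b) \<le> 4^b" by (simp add: power_mult)
    show "real D ^ D \<le> exp (real b) * fact D"
    proof -
      have "exp (real D) \<le> exp (real b)" using assms by simp
      then have "exp (real D) * fact D \<le> exp (real b) * fact D" by (rule mult_right_mono) simp
      then show ?thesis using pow_le_exp_fact[of D] by linarith
    qed
    have "real D ^ b \<le> real b ^ b" using assms by (intro power_mono) auto
    then show "real D ^ b \<le> exp (real b) * fact b" using pow_le_exp_fact[of b] by linarith
  qed auto
  also have "\<dots> = (4*exp 1^2)^b * fact b * fact D"
  proof -
    have E: "exp (real b) = exp 1 ^ b" using exp_of_nat_mult[of b 1] by simp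
    have X: "(4*exp 1^2)^b = (4::real)^b * (exp 1^b * exp 1^b)"
      by (simp only: power_mult_distrib power2_eq_square)
    show ?thesis by (simp only: E X) (simp add: mult_ac)
  qed
  finally have "(2*real D)^(D+b) / fact D \<le> (4*exp 1^2)^b * fact b"
    by (subst pos_divide_le_eq) simp_all
  with t1 show ?thesis by linarith
next
  case False
  have deg: "degree (QQ D) \<le> D"
    by (rule order.trans[OF degree_prod_sum_le]) auto
  have "coeff (QQ D) (a-b) = 0" using deg False by (intro coeff_eq_0) auto
  then show ?thesis by simp
qed



lemma coeff_ofnat_mult: "coeff (of_nat n * p :: int poly) k = int n * coeff p k"
  by (simp add: of_nat_poly)

theorem lemma4:
  fixes LG :: "nat \<Rightarrow> nat \<Rightarrow> 'g lgraph set"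
  assumes walk_len: "\<And>a N x. x \<in> LG a N \<Longrightarrow> length (snd x) = a"
    and symm_inv: "\<And>a N p e x. bij p \<Longrightarrow> x \<in> LG a N \<Longrightarrow> act p e x \<in> LG a N"
    and count_bound: "\<And>a D. finite {(N, x). 1 \<le> N \<and> x \<in> LG a N \<and> coords x \<subseteq> {..<D}}
        \<and> card {(N, x). 1 \<le> N \<and> x \<in> LG a N \<and> coords x \<subseteq> {..<D}} \<le> (2 * D) ^ a"
    and dim_len: "\<And>a N x. x \<in> LG a N \<Longrightarrow> 2 * dimensionality x \<le> a"
  shows "\<exists>C::real. \<forall>b\<ge>1.
           real_of_int (\<Sum>a\<in>{b+1..2*b}. \<bar>lace_cab LG a b\<bar>) \<le> C ^ b * fact b"
proof -
  define K :: real where "K = 4*exp 1^2"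
  have Kpos: "0 \<le> K" unfolding K_def by simp
  have h4: "(\<Sum>N\<in>S. lace_f LG a N D) * (2^D * fact D) \<le> (2*D)^a"
    if S: "finite S" "\<forall>N\<in>S. 1 \<le> N" for S a D
  proof -
    define W where "W = {(N, x). 1 \<le> N \<and> x \<in> LG a N \<and> coords x \<subseteq> {..<D}}"
    define AN where "AN N = {x \<in> LG a N. coords x = {..<D}}" for N
    have finW: "finite W" and cW: "card W \<le> (2*D)^a" using count_bound[of a D] unfolding W_def by auto
    have finA: "finite (AN N)" if "N \<in> S" for N
    proof (rule finite_subset)
      show "AN N \<subseteq> snd ` W"
      proof
        fix x assume "x \<in> AN N"
        then have "(N, x) \<in> W" using S that unfolding AN_def W_def by auto
        then show "x \<in> snd ` W" by (rule rev_image_eqI) simp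
      qed
    qed (use finW in simp)
    have fb: "lace_f LG a N D * (2^D * fact D) \<le> card (AN N)" if N: "N \<in> S" for N
    proof -
      have "card (AN N // sperm_rel D (AN N)) * (2 ^ D * fact D) \<le> card (AN N)"
      proof (rule classes_bound)
        show "finite (AN N)" using finA N .
        show "\<forall>x\<in>AN N. coords x = {..<D}" unfolding AN_def by simp
        show "\<forall>x\<in>AN N. \<forall>p e. p permutes {..<D} \<longrightarrow> act p e x \<in> AN N"
        proof (intro ballI allI impI)
          fix x p e assume x: "x \<in> AN N" and p: "p permutes {..<D}"
          have "act p e x \<in> LG a N" using symm_inv[OF permutes_bij[OF p]] x unfolding AN_def by auto
          moreover have "coords (act p e x) = {..<D}"
            using x permutes_image[OF p] unfolding AN_def by (simp add: coords_act)
          ultimately show "act p e x \<in> AN N" unfolding AN_def by simp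
        qed
      qed
      then show ?thesis unfolding lace_f_def Let_def AN_def .
    qed
    have "(\<Sum>N\<in>S. lace_f LG a N D) * (2^D * fact D) = (\<Sum>N\<in>S. lace_f LG a N D * (2^D * fact D))"
      by (simp add: sum_distrib_right)
    also have "\<dots> \<le> (\<Sum>N\<in>S. card (AN N))" by (rule sum_mono) (rule fb)
    also have "\<dots> = card (SIGMA N:S. AN N)" using S finA by simp
    also have "\<dots> \<le> card W"
    proof (rule card_mono[OF finW])
      show "(SIGMA N:S. AN N) \<subseteq> W" unfolding AN_def W_def using S by auto
    qed
    also have "\<dots> \<le> (2*D)^a" by (rule cW)
    finally show ?thesis .
  qed
  have cab: "real_of_int \<bar>lace_cab LG a b\<bar> \<le> real (a div 2) * (K^b * fact b)"
    if ab: "1 \<le> b" "b < a" "a \<le> 2*b" for a b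
  proof -
    define S where "S = {N. 1 \<le> N \<and> lace_c LG a b N \<noteq> 0}"
    have rhs: "0 \<le> real (a div 2) * (K^b * fact b)" using Kpos by simp
    show ?thesis
    proof (cases "finite S")
      case False
      then have "lace_cab LG a b = 0" unfolding lace_cab_def S_def by simp
      then show ?thesis using rhs by simp
    next
      case True
      have S1: "\<forall>N\<in>S. 1 \<le> N" unfolding S_def by simp
      have R1: "real_of_int \<bar>lace_cab LG a b\<bar> \<le> (\<Sum>N\<in>S. real_of_int \<bar>lace_c LG a b N\<bar>)"
      proof -
        have "\<bar>lace_cab LG a b\<bar> \<le> (\<Sum>N\<in>S. \<bar>(-1) ^ (N + 1) * lace_c LG a b N\<bar>)"
          unfolding lace_cab_def S_def[symmetric] by (rule sum_abs)
        also have "\<dots> = (\<Sum>N\<in>S. \<bar>lace_c LG a b N\<bar>)" by (simp add: abs_mult)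
        finally show ?thesis by (metis of_int_le_iff of_int_sum)
      qed
      have R2: "real_of_int \<bar>lace_c LG a b N\<bar> \<le>
          (\<Sum>D\<in>{1..a div 2}. real (lace_f LG a N D) * real_of_int \<bar>coeff (QQ D) (a - b)\<bar>)" for N
      proof -
        have "lace_c LG a b N = (\<Sum>D\<in>{1..a div 2}. int (lace_f LG a N D) * coeff (QQ D) (a - b))"
          unfolding lace_c_def by (simp add: coeff_sum coeff_ofnat_mult)
        then have "\<bar>lace_c LG a b N\<bar> \<le> (\<Sum>D\<in>{1..a div 2}. \<bar>int (lace_f LG a N D) * coeff (QQ D) (a - b)\<bar>)"
          by (simp add: sum_abs)
        also have "\<dots> = (\<Sum>D\<in>{1..a div 2}. int (lace_f LG a N D) * \<bar>coeff (QQ D) (a - b)\<bar>)"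
          by (simp add: abs_mult)
        finally have "real_of_int \<bar>lace_c LG a b N\<bar> \<le> real_of_int (\<Sum>D\<in>{1..a div 2}. int (lace_f LG a N D) * \<bar>coeff (QQ D) (a - b)\<bar>)"
          by (simp only: of_int_le_iff)
        then show ?thesis by simp
      qed
      have "real_of_int \<bar>lace_cab LG a b\<bar> \<le>
          (\<Sum>N\<in>S. \<Sum>D\<in>{1..a div 2}. real (lace_f LG a N D) * real_of_int \<bar>coeff (QQ D) (a - b)\<bar>)"
        using R1 sum_mono[of S "\<lambda>N. real_of_int \<bar>lace_c LG a b N\<bar>", OF R2] by linarith
      also have "\<dots> = (\<Sum>D\<in>{1..a div 2}. real_of_int \<bar>coeff (QQ D) (a - b)\<bar> * real (\<Sum>N\<in>S. lace_f LG a N D))"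
        by (subst sum.swap) (simp add: sum_distrib_right mult.commute)
      also have "\<dots> \<le> (\<Sum>D\<in>{1..a div 2}. K^b * fact b)"
      proof (rule sum_mono)
        fix D assume D: "D \<in> {1..a div 2}"
        have pos: "(0::real) < 2^D * fact D" by simp
        have "real ((\<Sum>N\<in>S. lace_f LG a N D) * (2^D * fact D)) \<le> real ((2*D)^a)"
          using h4[OF True S1, of a D] by (simp only: of_nat_le_iff)
        then have "real (\<Sum>N\<in>S. lace_f LG a N D) * (2^D * fact D) \<le> (2*real D)^a" by simp
        then have f: "real (\<Sum>N\<in>S. lace_f LG a N D) \<le> (2*real D)^a / (2^D * fact D)"
          using pos by (simp add: pos_le_divide_eq)
        have "real_of_int \<bar>coeff (QQ D) (a - b)\<bar> * real (\<Sum>N\<in>S. lace_f LG a N D)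
              \<le> real_of_int \<bar>coeff (QQ D) (a - b)\<bar> * ((2*real D)^a / (2^D * fact D))"
          by (rule mult_left_mono[OF f]) simp
        also have "\<dots> = real_of_int \<bar>coeff (QQ D) (a - b)\<bar> * (2*real D)^a / (2^D * fact D)" by simp
        also have "\<dots> \<le> K^b * fact b" unfolding K_def
          by (rule term_bound) (use D ab in auto)
        finally show "real_of_int \<bar>coeff (QQ D) (a - b)\<bar> * real (\<Sum>N\<in>S. lace_f LG a N D) \<le> K^b * fact b" .
      qed
      also have "\<dots> = real (a div 2) * (K^b * fact b)" by simp
      finally show ?thesis .
    qed
  qed
  show ?thesis
  proof (intro exI[of _ "4*K"] allI impI)
    fix b :: nat assume b: "1 \<le> b"
    have "real_of_int (\<Sum>a\<in>{b+1..2*b}. \<bar>lace_cab LG a b\<bar>) = (\<Sum>a\<in>{b+1..2*b}. real_of_int \<bar>lace_cab LG a b\<bar>)"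
      by simp
    also have "\<dots> \<le> (\<Sum>a\<in>{b+1..2*b}. real b * (K^b * fact b))"
    proof (rule sum_mono)
      fix a assume a: "a \<in> {b+1..2*b}"
      have "a \<le> 2*b" using a by simp
      then have "a div 2 \<le> b" by presburger
      then have "real (a div 2) \<le> real b" by simp
      then have "real (a div 2) * (K^b * fact b) \<le> real b * (K^b * fact b)"
        by (rule mult_right_mono) (use Kpos in simp)
      then show "real_of_int \<bar>lace_cab LG a b\<bar> \<le> real b * (K^b * fact b)"
        using cab[of b a] a b by force
    qed
    also have "\<dots> = real b * real b * (K^b * fact b)" by simp
    also have "\<dots> \<le> 4^b * (K^b * fact b)"
    proof (rule mult_right_mono)
      have "b < 2^b" by (rule less_exp)
      then have "real b \<le> 2^b" by (metis less_imp_le of_nat_le_iff of_nat_numeral of_nat_power)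
      then have "real b * real b \<le> 2^b * 2^b" by (intro mult_mono) auto
      then show "real b * real b \<le> 4^b" by (metis power_mult_distrib mult_2 numeral_Bit0 numeral_One mult_numeral_1)
    qed (use Kpos in simp)
    also have "\<dots> = (4*K)^b * fact b" by (simp add: power_mult_distrib)
    finally show "real_of_int (\<Sum>a\<in>{b+1..2*b}. \<bar>lace_cab LG a b\<bar>) \<le> (4*K)^b * fact b" .
  qed
qed

end
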